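(* Let $M,N,d$ be positive integers with $d>MN$. For $i=1,\dots,M$ let $X_i\in\mathbb{R}^{N\times d}$ and $y_i\in\mathbb{R}^N$, and suppose the stacked matrix $X_c=[X_1^T,\dots,X_M^T]^T\in\mathbb{R}^{MN\times d}$ has full row rank $MN$; let $y_c=[y_1^T,\dots,y_M^T]^T$. Consider Local-GD for linear regression with $w_0^0=0$: for $k=0,1,2,\dots$ each node $i$ runs gradient descent $w\mapsto w-\eta\nabla f_i(w)$ on $f_i(w)=\frac{1}{2N}\|y_i-X_iw\|^2$ initialized at $w_0^k$, with a constant step size small enough for convergence, until convergence, and sets $w_i^{k+1}$ to be the limit; then $w_0^{k+1}=\frac1M\sum_{i=1}^M w_i^{k+1}$. Let $w_c=X_c^T(X_cX_c^T)^{-1}y_c$ be the centralized model (the minimum-Euclidean-norm solution of $X_cw=y_c$, equivalently the limit of gradient descent from $0$ on the total squared loss). Then $w_0^K\to w_c$ as $K\to\infty$.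
   Context: Distributed setting with $M$ compute nodes; node $i$ holds data matrix $X_i$ (rows are samples) and labels $y_i$. Each local problem is solved to convergence in every communication round. *)

theory Defs
  imports "HOL-Analysis.Analysis"
begin

text \<open>Nodes are indexed by a finite type 'm (M = CARD('m)), rows of each local
data matrix by a finite type 'n (N = CARD('n)), features by 'd (d = CARD('d)).\<close>

definition local_loss :: "real^'d^'n \<Rightarrow> real^'n \<Rightarrow> real^'d \<Rightarrow> real" where
  "local_loss X y w = (1 / (2 * real CARD('n))) * (norm (y - X *v w))\<^sup>2"

definition local_grad :: "real^'d^'n \<Rightarrow> real^'n \<Rightarrow> real^'d \<Rightarrow> real^'d" where
  "local_grad X y w = (1 / real CARD('n)) *\<^sub>R (transpose X *v (X *v w - y))"

definition gd_iter :: "real^'d^'n \<Rightarrow> real^'n \<Rightarrow> real \<Rightarrow> real^'d \<Rightarrow> nat \<Rightarrow> real^'d" where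
  "gd_iter X y eta w t = ((\<lambda>v. v - eta *\<^sub>R local_grad X y v) ^^ t) w"

definition local_solve :: "real^'d^'n \<Rightarrow> real^'n \<Rightarrow> real \<Rightarrow> real^'d \<Rightarrow> real^'d" where
  "local_solve X y eta w = lim (gd_iter X y eta w)"

primrec local_gd :: "('m::finite \<Rightarrow> real^'d^'n) \<Rightarrow> ('m \<Rightarrow> real^'n) \<Rightarrow> real \<Rightarrow> nat \<Rightarrow> real^'d" where
  "local_gd X y eta 0 = 0"
| "local_gd X y eta (Suc k) =
     (1 / real CARD('m)) *\<^sub>R (\<Sum>i\<in>UNIV. local_solve (X i) (y i) eta (local_gd X y eta k))"

text \<open>Stacked matrix X_c (rows indexed by pairs (node, local row)) and stacked labels.\<close>
definition stack_X :: "('m::finite \<Rightarrow> real^'d^'n) \<Rightarrow> real^'d^('m \<times> 'n)" where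
  "stack_X X = (\<chi> p. X (fst p) $ snd p)"

definition stack_y :: "('m::finite \<Rightarrow> real^'n) \<Rightarrow> real^('m \<times> 'n)" where
  "stack_y y = (\<chi> p. y (fst p) $ snd p)"

definition central_model :: "real^'d^('m::finite \<times> 'n::finite) \<Rightarrow> real^('m \<times> 'n) \<Rightarrow> real^'d" where
  "central_model Xc yc = transpose Xc *v (matrix_inv (Xc ** transpose Xc) *v yc)"

end

theory Submission
  imports Defs
begin

lemma inner_transpose_mv:
  fixes A :: "real^'d^'n"
  shows "x \<bullet> (transpose A *v z) = (A *v x) \<bullet> z"
  by (simp add: inner_vec_def matrix_vector_mult_def transpose_def sum_distrib_left
      sum_distrib_right mult_ac sum.swap[of _ "UNIV::'n set"])

lemma gram_invertible:
  fixes A :: "real^'d^'m"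
  assumes "rank A = CARD('m)"
  shows "invertible (A ** transpose A)"
proof -
  have inj: "inj ((*v) (transpose A))"
    using assms by (simp add: full_rank_injective[symmetric] rank_transpose)
  have "\<forall>z. (A ** transpose A) *v z = 0 \<longrightarrow> z = 0"
  proof (intro allI impI)
    fix z :: "real^'m"
    assume h: "(A ** transpose A) *v z = 0"
    have "z \<bullet> (transpose (transpose A) *v (transpose A *v z)) = (transpose A *v z) \<bullet> (transpose A *v z)"
      by (rule inner_transpose_mv)
    moreover have "A *v (transpose A *v z) = 0" using h by (metis matrix_vector_mul_assoc)
    ultimately have "(transpose A *v z) \<bullet> (transpose A *v z) = 0"
      by (metis inner_zero_right transpose_transpose)
    then have "transpose A *v z = 0" by simp
    then show "z = 0" using inj by (metis inj_eq matrix_vector_mult_0_right)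
  qed
  then show ?thesis
    by (simp add: invertible_left_inverse matrix_left_invertible_ker)
qed

lemma matrix_inv_props:
  assumes "invertible (A::real^'n^'n)"
  shows "A ** matrix_inv A = mat 1" "matrix_inv A ** A = mat 1"
  using someI_ex[OF assms[unfolded invertible_def]] unfolding matrix_inv_def by auto

lemma subspace_range_mv: "subspace (range (\<lambda>z. (A::real^'a^'b) *v z))"
  by (simp add: subspace_UNIV linear_subspace_image)

lemma local_solve_props:
  fixes X :: "real^'d^'n"
  assumes eta: "eta > 0" and conv: "convergent (gd_iter X y eta w)" and c: "X *v c = y"
  shows "X *v (local_solve X y eta w - c) = 0"
    and "local_solve X y eta w - w \<in> range (\<lambda>z. transpose X *v z)"
proof -
  define f where "f = (\<lambda>v. v - eta *\<^sub>R local_grad X y v)"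
  define L where "L = local_solve X y eta w"
  have lim: "gd_iter X y eta w \<longlonglongrightarrow> L"
    using conv unfolding L_def local_solve_def by (simp add: convergent_LIMSEQ_iff)
  have suc: "gd_iter X y eta w (Suc t) = f (gd_iter X y eta w t)" for t
    unfolding gd_iter_def f_def by simp
  have "(\<lambda>t. gd_iter X y eta w (Suc t)) \<longlonglongrightarrow> L"
    using lim by (rule LIMSEQ_Suc)
  moreover have "(\<lambda>t. f (gd_iter X y eta w t)) \<longlonglongrightarrow> f L"
    unfolding f_def local_grad_def
    by (intro tendsto_intros lim bounded_linear.tendsto[OF matrix_vector_mul_bounded_linear])
  ultimately have "L = f L" unfolding suc by (rule LIMSEQ_unique)
  moreover have "eta *\<^sub>R local_grad X y L = L - f L" unfolding f_def by simp
  ultimately have "eta *\<^sub>R local_grad X y L = 0" by simp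
  then have g0: "transpose X *v (X *v L - y) = 0"
    using eta unfolding local_grad_def by simp
  have h1: "(L - c) \<bullet> (transpose X *v (X *v (L - c))) = (X *v (L - c)) \<bullet> (X *v (L - c))"
    by (rule inner_transpose_mv)
  have h2: "X *v (L - c) = X *v L - y" using c by (simp add: matrix_vector_mult_diff_distrib)
  have "transpose X *v (X *v (L - c)) = 0" using g0 h2 by (simp only:)
  then have "(X *v (L - c)) \<bullet> (X *v (L - c)) = 0" using h1 by (metis inner_zero_right)
  then show "X *v (L - c) = 0" unfolding L_def by simp
  let ?S = "range (\<lambda>z. transpose X *v z)"
  have sub: "subspace ?S" by (rule subspace_range_mv)
  have mem: "gd_iter X y eta w t - w \<in> ?S" for t
  proof (induction t)
    case 0
    then show ?case using subspace_0[OF sub] by (simp add: gd_iter_def)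
  next
    case (Suc t)
    have "gd_iter X y eta w (Suc t) - w = (gd_iter X y eta w t - w)
       - (eta * (1 / real CARD('n))) *\<^sub>R (transpose X *v (X *v gd_iter X y eta w t - y))"
      unfolding suc f_def local_grad_def by simp
    also have "\<dots> \<in> ?S"
      by (intro subspace_diff[OF sub] Suc subspace_mul[OF sub]) auto
    finally show ?case .
  qed
  have lw: "(\<lambda>t. gd_iter X y eta w t - w) \<longlonglongrightarrow> L - w"
    by (intro tendsto_intros lim)
  show "L - w \<in> ?S"
    by (rule closed_sequentially[OF closed_subspace[OF sub] _ lw]) (use mem in blast)
qed

lemma sq_sum_le:
  fixes x :: "'a \<Rightarrow> real"
  assumes "finite A"
  shows "(\<Sum>i\<in>A. x i)\<^sup>2 \<le> real (card A) * (\<Sum>i\<in>A. (x i)\<^sup>2)"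
proof -
  have "0 \<le> (\<Sum>i\<in>A. \<Sum>j\<in>A. (x i - x j)\<^sup>2)" by (intro sum_nonneg) auto
  also have "\<dots> = (\<Sum>i\<in>A. \<Sum>j\<in>A. (x i)\<^sup>2) + (\<Sum>i\<in>A. \<Sum>j\<in>A. (x j)\<^sup>2)
      - 2 * (\<Sum>i\<in>A. \<Sum>j\<in>A. x i * x j)"
    by (simp add: power2_diff sum.distrib sum_subtractf sum_distrib_left algebra_simps)
  also have "\<dots> = 2 * (real (card A) * (\<Sum>i\<in>A. (x i)\<^sup>2)) - 2 * (\<Sum>i\<in>A. x i)\<^sup>2"
    by (simp add: sum_product power2_eq_square sum_distrib_left[symmetric] sum.swap[of _ A A] mult.commute)
  finally show ?thesis by simp
qed

lemma jensen_norm: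
  fixes a :: "'m::finite \<Rightarrow> 'v::real_normed_vector"
  shows "(norm ((1 / real CARD('m)) *\<^sub>R (\<Sum>i\<in>UNIV. a i)))\<^sup>2
     \<le> (1 / real CARD('m)) * (\<Sum>i\<in>UNIV. (norm (a i))\<^sup>2)"
proof -
  have M: "real CARD('m) > 0" by simp
  have "(norm (\<Sum>i\<in>UNIV. a i))\<^sup>2 \<le> (\<Sum>i\<in>UNIV. norm (a i))\<^sup>2"
    by (intro power_mono norm_sum) auto
  also have "\<dots> \<le> real CARD('m) * (\<Sum>i\<in>UNIV. (norm (a i))\<^sup>2)"
    by (rule sq_sum_le) simp
  finally have h: "(norm (\<Sum>i\<in>UNIV. a i))\<^sup>2 \<le> real CARD('m) * (\<Sum>i\<in>UNIV. (norm (a i))\<^sup>2)" .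
  have "(norm ((1 / real CARD('m)) *\<^sub>R (\<Sum>i\<in>UNIV. a i)))\<^sup>2
      = (norm (\<Sum>i\<in>UNIV. a i))\<^sup>2 / (real CARD('m))\<^sup>2"
    by (simp add: power_divide)
  also have "\<dots> \<le> real CARD('m) * (\<Sum>i\<in>UNIV. (norm (a i))\<^sup>2) / (real CARD('m))\<^sup>2"
    by (intro divide_right_mono h) simp
  also have "\<dots> = (1 / real CARD('m)) * (\<Sum>i\<in>UNIV. (norm (a i))\<^sup>2)"
    using M by (simp add: power2_eq_square)
  finally show ?thesis .
qed

lemma stack_mv: "(stack_X X *v v) $ (i, r) = (X i *v v) $ r"
  by (simp add: stack_X_def matrix_vector_mult_def)

lemma stack_transpose:
  fixes X :: "'m::finite \<Rightarrow> real^'d^'n"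
  shows "transpose (X i) *v z = transpose (stack_X X) *v (\<chi> p. if fst p = i then z $ snd p else 0)"
proof -
  have "(transpose (X i) *v z) $ j = (transpose (stack_X X) *v (\<chi> p. if fst p = i then z $ snd p else 0)) $ j" for j
  proof -
    have "(transpose (stack_X X) *v (\<chi> p. if fst p = i then z $ snd p else 0)) $ j
        = (\<Sum>p\<in>UNIV \<times> UNIV. X (fst p) $ snd p $ j * (if fst p = i then z $ snd p else 0))"
      by (simp add: matrix_vector_mult_def transpose_def stack_X_def UNIV_Times_UNIV)
    also have "\<dots> = (\<Sum>i'\<in>UNIV. \<Sum>r\<in>UNIV. X i' $ r $ j * (if i' = i then z $ r else 0))"
      by (simp add: sum.cartesian_product split_def)
    also have "\<dots> = (\<Sum>i'\<in>UNIV. if i' = i then (\<Sum>r\<in>UNIV. X i $ r $ j * z $ r) else 0)"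
      by (rule sum.cong) auto
    also have "\<dots> = (\<Sum>r\<in>UNIV. X i $ r $ j * z $ r)"
      by simp
    also have "\<dots> = (transpose (X i) *v z) $ j"
      by (simp add: matrix_vector_mult_def transpose_def)
    finally show ?thesis by simp
  qed
  then show ?thesis by (simp add: vec_eq_iff)
qed

theorem theorem1:
  fixes X :: "'m::finite \<Rightarrow> real^'d^'n"
    and y :: "'m \<Rightarrow> real^'n"
    and eta :: real
  assumes dim: "CARD('d) > CARD('m) * CARD('n)"
    and full_rank: "rank (stack_X X) = CARD('m) * CARD('n)"
    and eta_pos: "eta > 0"
    and eta_conv: "\<And>i w. convergent (gd_iter (X i) (y i) eta w)"
  shows "local_gd X y eta \<longlonglongrightarrow> central_model (stack_X X) (stack_y y)"
proof -
  define Xc where "Xc = stack_X X"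
  define yc where "yc = stack_y y"
  define G where "G = Xc ** transpose Xc"
  define wc where "wc = central_model Xc yc"
  define M where "M = real CARD('m)"
  have Mpos: "M > 0" unfolding M_def by simp
  have Ginv: "invertible G"
    unfolding G_def Xc_def by (rule gram_invertible) (simp add: full_rank)
  have wc_eq: "wc = transpose Xc *v (matrix_inv G *v yc)"
    unfolding wc_def central_model_def G_def ..
  have "Xc *v wc = (G ** matrix_inv G) *v yc"
    unfolding wc_eq G_def by (simp only: matrix_vector_mul_assoc matrix_mul_assoc)
  then have Xcwc: "Xc *v wc = yc" using matrix_inv_props(1)[OF Ginv] by simp
  have Xiwc: "X i *v wc = y i" for i
  proof -
    have "(X i *v wc) $ r = y i $ r" for r
      using Xcwc stack_mv[of X wc i r] unfolding Xc_def yc_def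
      by (metis stack_y_def vec_lambda_beta fst_conv snd_conv)
    then show ?thesis by (simp add: vec_eq_iff)
  qed
  define g where "g k = local_gd X y eta k" for k
  define e where "e k = g k - wc" for k
  define L where "L i k = local_solve (X i) (y i) eta (g k)" for i k
  have A1: "X i *v (L i k - wc) = 0" for i k
    unfolding L_def by (rule local_solve_props(1)[OF eta_pos eta_conv Xiwc])
  have A2: "L i k - g k \<in> range (\<lambda>z. transpose (X i) *v z)" for i k
    unfolding L_def by (rule local_solve_props(2)[OF eta_pos eta_conv Xiwc])
  have pyth: "(norm (e k))\<^sup>2 = (norm (L i k - wc))\<^sup>2 + (norm (g k - L i k))\<^sup>2" for i k
  proof -
    obtain z where z: "L i k - g k = transpose (X i) *v z" using A2[of i k] by blast
    have "g k - L i k = transpose (X i) *v (- z)"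
      using z linear_neg[OF matrix_vector_mul_linear[of "transpose (X i)"]] by (metis minus_diff_eq)
    then have "(L i k - wc) \<bullet> (g k - L i k) = (X i *v (L i k - wc)) \<bullet> (- z)"
      by (simp only: inner_transpose_mv)
    then have "orthogonal (L i k - wc) (g k - L i k)"
      using A1 by (simp add: orthogonal_def)
    moreover have "e k = (L i k - wc) + (g k - L i k)" unfolding e_def by simp
    ultimately show ?thesis by (metis norm_add_Pythagorean)
  qed
  have rec: "e (Suc k) = (1 / M) *\<^sub>R (\<Sum>i\<in>UNIV. L i k - wc)" for k
  proof -
    have "(\<Sum>i\<in>UNIV. L i k - wc) = (\<Sum>i\<in>UNIV. L i k) - M *\<^sub>R wc"
      by (simp add: sum_subtractf M_def sum_constant_scaleR del: sum_constant)
    then show ?thesis using Mpos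
      by (simp add: e_def g_def L_def M_def scaleR_diff_right)
  qed
  have dec: "(norm (g k - L i k))\<^sup>2 \<le> M * ((norm (e k))\<^sup>2 - (norm (e (Suc k)))\<^sup>2)" for i k
  proof -
    have pj: "(norm (L j k - wc))\<^sup>2 = (norm (e k))\<^sup>2 - (norm (g k - L j k))\<^sup>2" for j
      using pyth[of k j] by simp
    have "(norm (e (Suc k)))\<^sup>2 \<le> (1/M) * (\<Sum>j\<in>UNIV. (norm (L j k - wc))\<^sup>2)"
      unfolding rec M_def by (rule jensen_norm)
    also have "\<dots> = (1/M) * (\<Sum>j\<in>UNIV. (norm (e k))\<^sup>2 - (norm (g k - L j k))\<^sup>2)"
      by (simp only: pj)
    also have "\<dots> = (norm (e k))\<^sup>2 - (1/M) * (\<Sum>j\<in>UNIV. (norm (g k - L j k))\<^sup>2)"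
      using Mpos by (simp add: sum_subtractf M_def field_simps)
    finally have h1: "(1/M) * (\<Sum>j\<in>UNIV. (norm (g k - L j k))\<^sup>2) \<le> (norm (e k))\<^sup>2 - (norm (e (Suc k)))\<^sup>2"
      by simp
    have h2: "(norm (g k - L i k))\<^sup>2 \<le> (\<Sum>j\<in>UNIV. (norm (g k - L j k))\<^sup>2)"
      by (rule member_le_sum) auto
    from h1 Mpos have "(\<Sum>j\<in>UNIV. (norm (g k - L j k))\<^sup>2) \<le> M * ((norm (e k))\<^sup>2 - (norm (e (Suc k)))\<^sup>2)"
      by (simp add: field_simps)
    with h2 show ?thesis by linarith
  qed
  define sq where "sq k = (norm (e k))\<^sup>2" for k
  have "decseq sq"
  proof (rule decseq_SucI)
    fix k
    have "0 \<le> (norm (g k - L undefined k))\<^sup>2" by simp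
    with dec[of k undefined] Mpos show "sq (Suc k) \<le> sq k" unfolding sq_def
      by (smt (verit) zero_le_mult_iff)
  qed
  then obtain l where sql: "sq \<longlonglongrightarrow> l"
    using decseq_convergent[of sq 0] unfolding sq_def by auto
  have sqd: "(\<lambda>k. M * (sq k - sq (Suc k))) \<longlonglongrightarrow> 0"
  proof -
    have "(\<lambda>k. M * (sq k - sq (Suc k))) \<longlonglongrightarrow> M * (l - l)"
      by (intro tendsto_intros sql LIMSEQ_Suc)
    then show ?thesis by simp
  qed
  have gl: "(\<lambda>k. g k - L i k) \<longlonglongrightarrow> 0" for i
  proof -
    have "(\<lambda>k. (norm (g k - L i k))\<^sup>2) \<longlonglongrightarrow> 0"
      by (rule Lim_null_comparison[OF _ sqd]) (use dec in \<open>auto simp: sq_def\<close>)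
    then have "(\<lambda>k. sqrt ((norm (g k - L i k))\<^sup>2)) \<longlonglongrightarrow> sqrt 0"
      by (rule tendsto_real_sqrt)
    then show ?thesis by (simp add: tendsto_norm_zero_iff)
  qed
  have Xie: "(\<lambda>k. X i *v e k) \<longlonglongrightarrow> 0" for i
  proof -
    have "X i *v e k = X i *v (g k - L i k)" for k
    proof -
      have "e k = (g k - L i k) + (L i k - wc)" unfolding e_def by simp
      then have "X i *v e k = X i *v (g k - L i k) + X i *v (L i k - wc)"
        by (simp only: matrix_vector_right_distrib)
      then show ?thesis using A1 by simp
    qed
    moreover have "(\<lambda>k. X i *v (g k - L i k)) \<longlonglongrightarrow> X i *v 0"
      by (rule bounded_linear.tendsto[OF matrix_vector_mul_bounded_linear gl])
    ultimately show ?thesis by simp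
  qed
  have Xce: "(\<lambda>k. Xc *v e k) \<longlonglongrightarrow> 0"
  proof (rule vec_tendstoI)
    fix p :: "'m \<times> 'n"
    obtain i r where p: "p = (i, r)" by fastforce
    have "(\<lambda>k. (X i *v e k) $ r) \<longlonglongrightarrow> (0::real^'n) $ r"
      by (intro tendsto_vec_nth Xie)
    then show "(\<lambda>k. (Xc *v e k) $ p) \<longlonglongrightarrow> (0::real^('m\<times>'n)) $ p"
      unfolding p Xc_def stack_mv by simp
  qed
  let ?S = "range (\<lambda>u. transpose Xc *v u)"
  have subS: "subspace ?S" by (rule subspace_range_mv)
  have XiS: "transpose (X i) *v z \<in> ?S" for i z
    unfolding Xc_def stack_transpose[of X i z] by (rule rangeI)
  have wcS: "wc \<in> ?S" unfolding wc_eq by (rule rangeI)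
  have inv: "e k \<in> ?S" for k
  proof (induction k)
    case 0
    have "e 0 = - wc" by (simp add: e_def g_def)
    then show ?case using subspace_neg[OF subS wcS] by simp
  next
    case (Suc k)
    have h: "L i k - wc = (L i k - g k) + e k" for i unfolding e_def by simp
    have "e (Suc k) = (1 / M) *\<^sub>R (\<Sum>i\<in>UNIV. (L i k - g k) + e k)"
      unfolding rec by (simp only: h)
    also have "\<dots> \<in> ?S"
    proof (intro subspace_mul[OF subS] subspace_sum[OF subS] subspace_add[OF subS] Suc)
      fix i
      obtain z where "L i k - g k = transpose (X i) *v z" using A2[of i k] by blast
      then show "L i k - g k \<in> ?S" using XiS by simp
    qed
    finally show ?case .
  qed
  define u where "u k = matrix_inv G *v (Xc *v e k)" for k
  have eu: "e k = transpose Xc *v u k" for k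
  proof -
    obtain v where v: "e k = transpose Xc *v v" using inv[of k] by blast
    have "Xc *v e k = G *v v" unfolding v G_def by (simp only: matrix_vector_mul_assoc)
    then have "u k = (matrix_inv G ** G) *v v" unfolding u_def by (simp only: matrix_vector_mul_assoc)
    then have "u k = v" using matrix_inv_props(2)[OF Ginv] by simp
    then show ?thesis using v by simp
  qed
  have "u \<longlonglongrightarrow> matrix_inv G *v 0"
    unfolding u_def by (rule bounded_linear.tendsto[OF matrix_vector_mul_bounded_linear Xce])
  then have "(\<lambda>k. transpose Xc *v u k) \<longlonglongrightarrow> transpose Xc *v (matrix_inv G *v 0)"
    by (rule bounded_linear.tendsto[OF matrix_vector_mul_bounded_linear])
  then have "(\<lambda>k. transpose Xc *v u k) \<longlonglongrightarrow> 0" by simp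
  moreover have "(\<lambda>k. transpose Xc *v u k) = e" using eu by (simp only: fun_eq_iff) simp
  ultimately have "e \<longlonglongrightarrow> 0" by simp
  then have "(\<lambda>k. e k + wc) \<longlonglongrightarrow> 0 + wc" by (intro tendsto_intros)
  then show ?thesis by (simp add: e_def g_def wc_def Xc_def yc_def)
qed

end
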